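(* Let $\mathbf{Y}=(Y_i)_{i=1}^4$ be an abstract scrambled $(0,2,3)$-net in base $2$. Then for every $\varepsilon>0$ there is $D\in\mathcal{D}^3_0$ such that \[ \frac{\mathbb{P}(Y_1,Y_2,Y_3\in D)}{\prod_{i=1}^3\mathbb{P}(Y_i\in D)}\ \ge\ \left(\frac43\right)^3-\varepsilon . \] In particular, $\gamma_{\mathcal{D}^3_0}(\mathbf{Y})\ge(4/3)^3=2.\overline{370}$.
   Context: An elementary interval in base $b$ of order $k$ is a set $\prod_{i=1}^d[k_ib^{-\ell_i},(k_i+1)b^{-\ell_i})\subseteq[0,1)^d$ with nonnegative integers $\ell_i$, $0\le k_i<b^{\ell_i}$, and volume $b^{-k}$. An $N$-point multiset in $[0,1)^d$, $N=b^m$, is a $(t,m,d)$-net in base $b$ if every elementary interval in base $b$ of order $m-t$ contains exactly $b^t$ of its points. Basic cubes are the sets $\prod_{j=1}^d[k_jb^{-(m-t)},(k_j+1)b^{-(m-t)})$, $k_j\in\{0,\dots,b^{m-t}-1\}$. A tuple $(Y_i)_{i=1}^N$ of random points in $[0,1)^d$ is an abstract scrambled $(t,m,d)$-net in base $b$ if: (i) almost surely it is a $(t,m,d)$-net in base $b$; (ii) $\mathbb{P}(Y_i\in C)=b^{-d(m-t)}$ for every $i$ and basic cube $C$; (iii) for all measurable $M$, nonempty $J\subseteq\{1,\dots,N\}$ and basic cubes $(C_j)_{j\in J}$ with $\mathbb{P}(\forall j\in J:Y_j\in C_j)>0$, $\mathbb{P}(\forall j\in J:Y_j\in M\mid\forall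 j\in J:Y_j\in C_j)=\prod_{j\in J}\lambda^d(M\cap C_j)/\lambda^d(C_j)$. $\mathcal{C}^d_0=\{[0,a)\mid a\in[0,1]^d\}$, $\mathcal{D}^d_0=\{B\setminus A\mid A,B\in\mathcal{C}^d_0\}$. For a random point set $\mathbf{X}=(X_n)_{n=1}^N$, $\gamma_{\mathcal{D}^d_0}(\mathbf{X})$ is the supremum over $S\in\mathcal{D}^d_0$ and nonempty $J\subseteq\{1,\dots,N\}$ of the ratios $\mathbb{P}(\bigcap_{j\in J}\{\mathbf{1}_S(X_j)=1\})/\prod_{j\in J}\mathbb{P}(\mathbf{1}_S(X_j)=1)$ and $\mathbb{P}(\bigcap_{j\in J}\{\mathbf{1}_S(X_j)=0\})/\prod_{j\in J}\mathbb{P}(\mathbf{1}_S(X_j)=0)$. *)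

theory Defs
  imports "HOL-Probability.Probability"
begin

text \<open>Points of [0,1)^d are vectors of type real^'n, d = CARD('n).
  Point sets (multisets) of N points are indexed families P :: nat => real^'n on {1..N}.\<close>

definition elementary_interval :: "nat \<Rightarrow> nat \<Rightarrow> (real^'n::finite) set \<Rightarrow> bool" where
  "elementary_interval b k E \<longleftrightarrow>
     (\<exists>(l::'n \<Rightarrow> nat) (kk::'n \<Rightarrow> nat).
        (\<forall>i. kk i < b ^ l i) \<and> (\<Sum>i\<in>UNIV. l i) = k \<and>
        E = {x. \<forall>i. real (kk i) / real b ^ l i \<le> x $ i \<and> x $ i < real (kk i + 1) / real b ^ l i})"

definition unit_cube :: "(real^'n::finite) set" where
  "unit_cube = {x. \<forall>i. 0 \<le> x $ i \<and> x $ i < 1}"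

definition is_tmd_net :: "nat \<Rightarrow> nat \<Rightarrow> nat \<Rightarrow> (nat \<Rightarrow> real^'n::finite) \<Rightarrow> bool" where
  "is_tmd_net b t m P \<longleftrightarrow>
     (\<forall>i\<in>{1..b^m}. P i \<in> unit_cube) \<and>
     (\<forall>E::(real^'n) set. elementary_interval b (m - t) E \<longrightarrow>
        card {i\<in>{1..b^m}. P i \<in> E} = b ^ t)"

definition basic_cube :: "nat \<Rightarrow> nat \<Rightarrow> nat \<Rightarrow> (real^'n::finite) set \<Rightarrow> bool" where
  "basic_cube b t m C \<longleftrightarrow>
     (\<exists>kk::'n \<Rightarrow> nat. (\<forall>j. kk j < b ^ (m - t)) \<and>
        C = {x. \<forall>j. real (kk j) / real b ^ (m - t) \<le> x $ j \<and>
                    x $ j < real (kk j + 1) / real b ^ (m - t)})"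

definition abstract_scrambled_net ::
    "'a measure \<Rightarrow> nat \<Rightarrow> nat \<Rightarrow> nat \<Rightarrow> (nat \<Rightarrow> 'a \<Rightarrow> real^'n::finite) \<Rightarrow> bool" where
  "abstract_scrambled_net M b t m Y \<longleftrightarrow>
     prob_space M \<and>
     (\<forall>i\<in>{1..b^m}. Y i \<in> borel_measurable M) \<and>
     (AE \<omega> in M. is_tmd_net b t m (\<lambda>i. Y i \<omega>)) \<and>
     (\<forall>i\<in>{1..b^m}. \<forall>C. basic_cube b t m C \<longrightarrow>
        measure M {\<omega>\<in>space M. Y i \<omega> \<in> C} = 1 / real b ^ (CARD('n) * (m - t))) \<and>
     (\<forall>A J Cs. A \<in> sets (lborel :: (real^'n) measure) \<longrightarrow> J \<subseteq> {1..b^m} \<longrightarrow> J \<noteq> {} \<longrightarrow>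
        (\<forall>j\<in>J. basic_cube b t m (Cs j)) \<longrightarrow>
        measure M {\<omega>\<in>space M. \<forall>j\<in>J. Y j \<omega> \<in> Cs j} > 0 \<longrightarrow>
        measure M {\<omega>\<in>space M. (\<forall>j\<in>J. Y j \<omega> \<in> A) \<and> (\<forall>j\<in>J. Y j \<omega> \<in> Cs j)}
          / measure M {\<omega>\<in>space M. \<forall>j\<in>J. Y j \<omega> \<in> Cs j}
        = (\<Prod>j\<in>J. measure lborel (A \<inter> Cs j) / measure lborel (Cs j)))"

definition anchored_box :: "real^'n::finite \<Rightarrow> (real^'n) set" where
  "anchored_box a = {x. \<forall>i. 0 \<le> x $ i \<and> x $ i < a $ i}"

definition C0 :: "(real^'n::finite) set set" where
  "C0 = {anchored_box a | a. \<forall>i. 0 \<le> a $ i \<and> a $ i \<le> 1}"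

definition D0 :: "(real^'n::finite) set set" where
  "D0 = {B - A | A B. A \<in> C0 \<and> B \<in> C0}"

text \<open>gamma_{D_0}(X) for X = (X 1, ..., X N); ratios as extended reals (a ratio with
  vanishing denominator is taken as 0 by the HOL convention x/0 = 0).\<close>
definition gamma_D0 :: "'a measure \<Rightarrow> nat \<Rightarrow> (nat \<Rightarrow> 'a \<Rightarrow> real^'n::finite) \<Rightarrow> ereal" where
  "gamma_D0 M N X =
     (SUP SJ \<in> {(S, J). S \<in> D0 \<and> J \<subseteq> {1..N} \<and> J \<noteq> {}}.
        max (ereal (measure M {\<omega>\<in>space M. \<forall>j\<in>snd SJ. X j \<omega> \<in> fst SJ}
                    / (\<Prod>j\<in>snd SJ. measure M {\<omega>\<in>space M. X j \<omega> \<in> fst SJ})))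
            (ereal (measure M {\<omega>\<in>space M. \<forall>j\<in>snd SJ. X j \<omega> \<notin> fst SJ}
                    / (\<Prod>j\<in>snd SJ. measure M {\<omega>\<in>space M. X j \<omega> \<notin> fst SJ}))))"

end

theory Submission
  imports Defs
begin

lemma hbox_sets: "{x::real^'n::finite. \<forall>j. l j \<le> x$j \<and> x$j < u j} \<in> sets borel"
  by measurable

lemma hbox_measure:
  fixes l u :: "'n::finite \<Rightarrow> real"
  assumes lu: "\<And>j. l j \<le> u j"
  shows "measure lborel {x::real^'n. \<forall>j. l j \<le> x$j \<and> x$j < u j} = (\<Prod>j\<in>UNIV. u j - l j)"
proof -
  define L :: "real^'n" where "L = (\<chi> j. l j)"
  define U :: "real^'n" where "U = (\<chi> j. u j)"
  let ?H = "{x::real^'n. \<forall>j. l j \<le> x$j \<and> x$j < u j}"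
  have sub1: "box L U \<subseteq> ?H" by (auto simp: mem_box_cart L_def U_def less_imp_le)
  have sub2: "?H \<subseteq> cbox L U" by (auto simp: mem_box_cart L_def U_def less_imp_le)
  have ne: "cbox L U \<noteq> {}" using lu by (auto simp: interval_eq_empty_cart L_def U_def not_less)
  have c: "measure lborel (cbox L U) = (\<Prod>j\<in>UNIV. u j - l j)"
    using content_cbox_cart[OF ne] by (simp add: L_def U_def)
  have b: "measure lborel (box L U) = measure lborel (cbox L U)"
    by (simp only: measure_lborel_box_eq measure_lborel_cbox_eq)
  have fm: "cbox L U \<in> fmeasurable lborel"
    using emeasure_bounded_finite[OF bounded_cbox] by (auto simp: fmeasurable_def)
  have Hs: "?H \<in> sets lborel" using hbox_sets by simp
  have "measure lborel (box L U) \<le> measure lborel ?H"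
    by (rule measure_mono_fmeasurable[OF sub1]) (auto intro: fmeasurableI2[OF fm sub2] simp: Hs)
  moreover have "measure lborel ?H \<le> measure lborel (cbox L U)"
    by (rule measure_mono_fmeasurable[OF sub2 Hs fm])
  ultimately show ?thesis using b c by linarith
qed

definition qcube :: "(3 \<Rightarrow> nat) \<Rightarrow> (real^3) set" where
  "qcube g = {x. \<forall>j. real (g j) / 4 \<le> x$j \<and> x$j < real (g j + 1) / 4}"

lemma qcube_sets: "qcube g \<in> sets borel"
  unfolding qcube_def by (rule hbox_sets)

lemma qcube_measure: "measure lborel (qcube g) = 1/64"
proof -
  have "measure lborel (qcube g) = (\<Prod>j\<in>UNIV. real (g j + 1) / 4 - real (g j) / 4)"
    unfolding qcube_def by (rule hbox_measure) (simp add: divide_right_mono)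
  also have "\<dots> = (\<Prod>j\<in>(UNIV::3 set). 1/4)"
  proof (rule prod.cong)
    fix j show "real (g j + 1) / 4 - real (g j) / 4 = 1/4" by (simp add: diff_divide_distrib[symmetric])
  qed simp
  also have "\<dots> = 1/64" by (simp add: prod_constant power_divide)
  finally show ?thesis .
qed

lemma qcube_floor:
  assumes "x \<in> qcube g" shows "g j = nat \<lfloor>4 * x$j\<rfloor>"
proof -
  have "real (g j) \<le> 4 * x$j" "4 * x$j < real (g j) + 1"
    using assms unfolding qcube_def by (auto simp: field_simps)
  then have "\<lfloor>4 * x$j\<rfloor> = int (g j)" by (simp add: floor_eq_iff)
  then show ?thesis by simp
qed

lemma qcube_disj: assumes "g \<noteq> g'" shows "qcube g \<inter> qcube g' = {}"
proof (rule ccontr)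
  assume "qcube g \<inter> qcube g' \<noteq> {}"
  then obtain x where "x \<in> qcube g" "x \<in> qcube g'" by blast
  then have "g j = g' j" for j using qcube_floor by metis
  then show False using assms by auto
qed

lemma qcube_floor_mem:
  assumes "\<And>j. 0 \<le> x$j" shows "x \<in> qcube (\<lambda>j. nat \<lfloor>4 * x$j\<rfloor>)"
proof -
  { fix j
    have "0 \<le> \<lfloor>4 * x$j\<rfloor>" using assms[of j] by simp
    then have "real (nat \<lfloor>4 * x$j\<rfloor>) = of_int \<lfloor>4 * x$j\<rfloor>" by simp
    then have "real (nat \<lfloor>4 * x$j\<rfloor>) / 4 \<le> x$j \<and> x$j < real (nat \<lfloor>4 * x$j\<rfloor> + 1) / 4"
      by (simp add: field_simps) linarith }
  then show ?thesis unfolding qcube_def by blast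
qed

lemma basic_cube_qcube: "(\<And>j. g j < 4) \<Longrightarrow> basic_cube 2 0 2 (qcube g)"
  unfolding basic_cube_def qcube_def by (rule exI[of _ g]) simp

definition G4 :: "(3 \<Rightarrow> nat) set" where "G4 = {g. \<forall>j. g j < 4}"

lemma finite_G4: "finite G4"
proof -
  have "G4 = PiE UNIV (\<lambda>_. {..<4})" by (auto simp: G4_def PiE_UNIV_domain)
  moreover have "finite (PiE (UNIV::3 set) (\<lambda>_. {..<4::nat}))" by (rule finite_PiE) auto
  ultimately show ?thesis by simp
qed

lemma unit_cube_cover: "unit_cube = (\<Union>g\<in>G4. qcube g)"
proof
  show "unit_cube \<subseteq> (\<Union>g\<in>G4. qcube g)"
  proof
    fix x :: "real^3" assume x: "x \<in> unit_cube"
    then have "\<And>j. 0 \<le> x$j" "\<And>j. x$j < 1" by (auto simp: unit_cube_def)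
    then have "x \<in> qcube (\<lambda>j. nat \<lfloor>4 * x$j\<rfloor>)" "(\<lambda>j. nat \<lfloor>4 * x$j\<rfloor>) \<in> G4"
      using qcube_floor_mem by (auto simp: G4_def floor_less_iff nat_less_iff)
    then show "x \<in> (\<Union>g\<in>G4. qcube g)" by blast
  qed
next
  show "(\<Union>g\<in>G4. qcube g) \<subseteq> unit_cube"
  proof safe
    fix x g assume "g \<in> G4" "x \<in> qcube g"
    then have "\<And>j. g j < 4" "\<And>j. real (g j) / 4 \<le> x$j \<and> x$j < real (g j + 1) / 4"
      by (auto simp: G4_def qcube_def)
    then have "0 \<le> x$j \<and> x$j < 1" for j
    proof -
      have a: "real (g j + 1) \<le> 4" using \<open>\<And>j. g j < 4\<close>[of j] by linarith
      have "0 \<le> real (g j) / 4" by simp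
      then show ?thesis using \<open>\<And>j. real (g j) / 4 \<le> x$j \<and> x$j < real (g j + 1) / 4\<close>[of j] a
        by (simp add: field_simps)
    qed
    then show "x \<in> unit_cube" by (auto simp: unit_cube_def)
  qed
qed

definition Sset :: "(3 \<Rightarrow> nat) set" where
  "Sset = {g. \<exists>j. g j = 2 \<and> (\<forall>i. i \<noteq> j \<longrightarrow> g i \<le> 1)}"

lemma Sset_G4: "Sset \<subseteq> G4"
proof
  fix g assume "g \<in> Sset"
  then obtain j where j: "g j = 2" "\<forall>i. i \<noteq> j \<longrightarrow> g i \<le> 1" unfolding Sset_def by blast
  have "g i < 4" for i using j by (cases "i = j") auto
  then show "g \<in> G4" unfolding G4_def by blast
qed

lemma net_unique:
  fixes P :: "nat \<Rightarrow> real^3"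
  assumes net: "is_tmd_net 2 0 2 P" and kk: "\<forall>i. kk i < 2 ^ l i" and l: "sum l UNIV = 2"
    and a: "a \<in> {1..4}" and b: "b \<in> {1..4}"
    and Pa: "\<forall>i. real (kk i) / 2 ^ l i \<le> P a $ i \<and> P a $ i < real (kk i + 1) / 2 ^ l i"
    and Pb: "\<forall>i. real (kk i) / 2 ^ l i \<le> P b $ i \<and> P b $ i < real (kk i + 1) / 2 ^ l i"
  shows "a = b"
proof -
  define E where "E = {x::real^3. \<forall>i. real (kk i) / real 2 ^ l i \<le> x $ i \<and> x $ i < real (kk i + 1) / real 2 ^ l i}"
  have "elementary_interval 2 (2 - 0) E"
    unfolding elementary_interval_def E_def using kk l by auto
  then have c: "card {k\<in>{1..2^2}. P k \<in> E} = 2 ^ 0"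
    using net unfolding is_tmd_net_def by blast
  have "a \<in> {k\<in>{1..2^2}. P k \<in> E}" "b \<in> {k\<in>{1..2^2}. P k \<in> E}"
    using a b Pa Pb by (auto simp: E_def)
  with c show ?thesis by (metis card_1_singletonE power_0 singletonD)
qed

lemma sum_if2: "j \<noteq> j' \<Longrightarrow> (\<Sum>i\<in>(UNIV::3 set). if i = j \<or> i = j' then 1 else 0::nat) = 2"
  using exhaust_3[of j] exhaust_3[of j'] by (auto simp: sum_3)

lemma net_struct:
  fixes P :: "nat \<Rightarrow> real^3"
  assumes net: "is_tmd_net 2 0 2 P" and top: "P 4 \<in> qcube (\<lambda>_. 3)" and i: "i \<in> {1,2,3}"
  shows "P i \<in> qcube (\<lambda>j. nat \<lfloor>4 * P i $ j\<rfloor>) \<and> (\<lambda>j. nat \<lfloor>4 * P i $ j\<rfloor>) \<in> Sset"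
proof -
  have uc: "0 \<le> P k $ j \<and> P k $ j < 1" if "k \<in> {1..4}" for k j
  proof -
    have "\<forall>i\<in>{1..2^2}. P i \<in> unit_cube" using net unfolding is_tmd_net_def by blast
    then have "P k \<in> unit_cube" using that by simp
    then show ?thesis unfolding unit_cube_def by blast
  qed
  have y: "3/4 \<le> P 4 $ j \<and> P 4 $ j < 1" for j
    using top unfolding qcube_def by simp
  have q1: "P k $ j < 3/4" if k: "k \<in> {1,2,3}" for k j
  proof (rule ccontr)
    assume "\<not> P k $ j < 3/4"
    then have h: "3/4 \<le> P k $ j" by simp
    have k4: "k \<in> {1..4}" using k by auto
    have "k = 4"
    proof (rule net_unique[OF net, of "\<lambda>i. if i = j then 3 else 0" "\<lambda>i. if i = j then 2 else 0"])
      show "\<forall>i. (if i = j then 3 else 0) < (2::nat) ^ (if i = j then 2 else 0)" by simp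
      show "(\<Sum>i\<in>UNIV. if i = j then 2 else 0) = (2::nat)" by simp
      show "k \<in> {1..4}" by (rule k4)
      show "(4::nat) \<in> {1..4}" by simp
      show "\<forall>i. real (if i = j then 3 else 0) / 2 ^ (if i = j then 2 else 0) \<le> P k $ i \<and>
          P k $ i < real ((if i = j then 3 else 0) + 1) / 2 ^ (if i = j then 2 else 0)"
        using uc[OF k4] h by simp
      show "\<forall>i. real (if i = j then 3 else 0) / 2 ^ (if i = j then 2 else 0) \<le> P 4 $ i \<and>
          P 4 $ i < real ((if i = j then 3 else 0) + 1) / 2 ^ (if i = j then 2 else 0)"
        using uc[of 4] y by simp
    qed
    then show False using k by auto
  qed
  have q2: "\<not> (1/2 \<le> P k $ j \<and> 1/2 \<le> P k $ j')" if k: "k \<in> {1,2,3}" and jj: "j \<noteq> j'" for k j j'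
  proof
    assume h: "1/2 \<le> P k $ j \<and> 1/2 \<le> P k $ j'"
    have k4: "k \<in> {1..4}" using k by auto
    have "k = 4"
    proof (rule net_unique[OF net, of "\<lambda>i. if i = j \<or> i = j' then 1 else 0" "\<lambda>i. if i = j \<or> i = j' then 1 else 0"])
      show "\<forall>i. (if i = j \<or> i = j' then 1 else 0) < (2::nat) ^ (if i = j \<or> i = j' then 1 else 0)" by simp
      show "(\<Sum>i\<in>UNIV. if i = j \<or> i = j' then 1 else 0) = (2::nat)" by (rule sum_if2[OF jj])
      show "k \<in> {1..4}" by (rule k4)
      show "(4::nat) \<in> {1..4}" by simp
      show "\<forall>i. real (if i = j \<or> i = j' then 1 else 0) / 2 ^ (if i = j \<or> i = j' then 1 else 0) \<le> P k $ i \<and>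
          P k $ i < real ((if i = j \<or> i = j' then 1 else 0) + 1) / 2 ^ (if i = j \<or> i = j' then 1 else 0)"
        using uc[OF k4] h by simp
      show "\<forall>i. real (if i = j \<or> i = j' then 1 else 0) / 2 ^ (if i = j \<or> i = j' then 1 else 0) \<le> P 4 $ i \<and>
          P 4 $ i < real ((if i = j \<or> i = j' then 1 else 0) + 1) / 2 ^ (if i = j \<or> i = j' then 1 else 0)"
      proof
        fix i
        have "3/4 \<le> P 4 $ i" "P 4 $ i < 1" using y[of i] by auto
        then show "real (if i = j \<or> i = j' then 1 else 0) / 2 ^ (if i = j \<or> i = j' then 1 else 0) \<le> P 4 $ i \<and>
          P 4 $ i < real ((if i = j \<or> i = j' then 1 else 0) + 1) / 2 ^ (if i = j \<or> i = j' then 1 else 0)"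
          by (cases "i = j \<or> i = j'") auto
      qed
    qed
    then show False using k by auto
  qed
  have q00: "k = k'" if k: "k \<in> {1,2,3}" and k': "k' \<in> {1,2,3}" and jj: "j \<noteq> j'"
    and h: "P k $ j < 1/2" "P k $ j' < 1/2" "P k' $ j < 1/2" "P k' $ j' < 1/2" for k k' j j'
  proof (rule net_unique[OF net, of "\<lambda>i. 0" "\<lambda>i. if i = j \<or> i = j' then 1 else 0"])
    have k4: "k \<in> {1..4}" "k' \<in> {1..4}" using k k' by auto
    show "\<forall>i. (0::nat) < (2::nat) ^ (if i = j \<or> i = j' then 1 else 0)" by simp
    show "(\<Sum>i\<in>UNIV. if i = j \<or> i = j' then 1 else 0) = (2::nat)" by (rule sum_if2[OF jj])
    show "k \<in> {1..4}" "k' \<in> {1..4}" by (rule k4)+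
    show "\<forall>i. real 0 / 2 ^ (if i = j \<or> i = j' then 1 else 0) \<le> P k $ i \<and>
          P k $ i < real (0 + 1) / 2 ^ (if i = j \<or> i = j' then 1 else 0)"
      using uc[OF k4(1)] h by simp
    show "\<forall>i. real 0 / 2 ^ (if i = j \<or> i = j' then 1 else 0) \<le> P k' $ i \<and>
          P k' $ i < real (0 + 1) / 2 ^ (if i = j \<or> i = j' then 1 else 0)"
      using uc[OF k4(2)] h by simp
  qed
  have q3: "\<exists>j. 1/2 \<le> P k $ j" if k: "k \<in> {1,2,3}" for k
  proof (rule ccontr)
    assume "\<not> (\<exists>j. 1/2 \<le> P k $ j)"
    then have lt: "P k $ j < 1/2" for j by (simp add: not_le)
    define k' where "k' = (if k = 1 then 2 else (1::nat))"
    have k': "k' \<in> {1,2,3}" "k' \<noteq> k" by (auto simp: k'_def)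
    have d12: "(1::3) \<noteq> 2" "(1::3) \<noteq> 3" "(2::3) \<noteq> 3" by simp_all
    have "(P k' $ 1 < 1/2 \<and> P k' $ 2 < 1/2) \<or> (P k' $ 1 < 1/2 \<and> P k' $ 3 < 1/2) \<or> (P k' $ 2 < 1/2 \<and> P k' $ 3 < 1/2)"
      using q2[OF k'(1) d12(1)] q2[OF k'(1) d12(2)] q2[OF k'(1) d12(3)] by linarith
    then have "k = k'" using q00[OF k k'(1) d12(1)] q00[OF k k'(1) d12(2)] q00[OF k k'(1) d12(3)] lt by blast
    then show False using k' by simp
  qed
  define g where "g = (\<lambda>j. nat \<lfloor>4 * P i $ j\<rfloor>)"
  have i4: "i \<in> {1..4}" using i by auto
  have mem: "P i \<in> qcube g" unfolding g_def using uc[OF i4] by (intro qcube_floor_mem) auto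
  obtain j where j: "1/2 \<le> P i $ j" using q3[OF i] by blast
  have "g j = 2"
  proof -
    have "2 \<le> 4 * P i $ j" "4 * P i $ j < 3" using j q1[OF i, of j] by linarith+
    then have "\<lfloor>4 * P i $ j\<rfloor> = 2" by (simp add: floor_eq_iff)
    then show ?thesis by (simp add: g_def)
  qed
  moreover have "g i' \<le> 1" if "i' \<noteq> j" for i'
  proof -
    have "P i $ i' < 1/2" using q2[OF i, of j i'] j that by auto
    then have "4 * P i $ i' < 2" by linarith
    then have "\<lfloor>4 * P i $ i'\<rfloor> \<le> 1" by (simp add: floor_le_iff)
    then have "nat \<lfloor>4 * P i $ i'\<rfloor> \<le> nat 1" by (rule nat_mono)
    then show ?thesis by (simp add: g_def)
  qed
  ultimately have "g \<in> Sset" unfolding Sset_def by blast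
  with mem show ?thesis by (simp add: g_def)
qed

lemma qcube_bounded: "bounded (qcube g)"
proof -
  have "qcube g \<subseteq> cbox (\<chi> j. real (g j) / 4) (\<chi> j. real (g j + 1) / 4)"
    by (auto simp: qcube_def mem_box_cart less_imp_le)
  then show ?thesis using bounded_subset bounded_cbox by blast
qed

lemma qcube_fin: "emeasure lborel (A \<inter> qcube g) \<noteq> \<infinity>"
proof -
  have b: "bounded (A \<inter> qcube g)" by (meson bounded_subset qcube_bounded Int_lower2)
  show ?thesis using emeasure_bounded_finite[OF b] by simp
qed

lemma asn_ps: "abstract_scrambled_net M 2 0 2 (Y :: nat \<Rightarrow> 'a \<Rightarrow> real^3) \<Longrightarrow> prob_space M"
  unfolding abstract_scrambled_net_def by blast

lemma asn_meas: "abstract_scrambled_net M 2 0 2 (Y :: nat \<Rightarrow> 'a \<Rightarrow> real^3) \<Longrightarrow> i \<in> {1..4} \<Longrightarrow> Y i \<in> borel_measurable M"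
  unfolding abstract_scrambled_net_def by simp

lemma asn_ae: "abstract_scrambled_net M 2 0 2 (Y :: nat \<Rightarrow> 'a \<Rightarrow> real^3) \<Longrightarrow> AE \<omega> in M. is_tmd_net 2 0 2 (\<lambda>i. Y i \<omega>)"
  unfolding abstract_scrambled_net_def by blast

lemma asn_marg:
  assumes asn: "abstract_scrambled_net M 2 0 2 (Y :: nat \<Rightarrow> 'a \<Rightarrow> real^3)" and i: "i \<in> {1..4}" and g: "g \<in> G4"
  shows "measure M {\<omega>\<in>space M. Y i \<omega> \<in> qcube g} = 1/64"
proof -
  have "basic_cube 2 0 2 (qcube g)" using g by (intro basic_cube_qcube) (auto simp: G4_def)
  then show ?thesis using asn i unfolding abstract_scrambled_net_def by simp
qed

lemma asn_cond:
  assumes asn: "abstract_scrambled_net M 2 0 2 (Y :: nat \<Rightarrow> 'a \<Rightarrow> real^3)"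
    and A: "A \<in> sets borel" and J: "J \<subseteq> {1..4}" "J \<noteq> {}" and Cs: "\<forall>j\<in>J. Cs j \<in> qcube ` G4"
    and pos: "measure M {\<omega>\<in>space M. \<forall>j\<in>J. Y j \<omega> \<in> Cs j} > 0"
  shows "measure M {\<omega>\<in>space M. (\<forall>j\<in>J. Y j \<omega> \<in> A) \<and> (\<forall>j\<in>J. Y j \<omega> \<in> Cs j)}
          / measure M {\<omega>\<in>space M. \<forall>j\<in>J. Y j \<omega> \<in> Cs j}
        = (\<Prod>j\<in>J. measure lborel (A \<inter> Cs j) / measure lborel (Cs j))"
proof -
  note d = asn[unfolded abstract_scrambled_net_def]
  have bc: "\<forall>j\<in>J. basic_cube 2 0 2 (Cs j)"
  proof
    fix j assume "j \<in> J"
    then obtain g where "g \<in> G4" "Cs j = qcube g" using Cs by blast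
    then show "basic_cube 2 0 2 (Cs j)" using basic_cube_qcube[of g] by (simp add: G4_def)
  qed
  have A': "A \<in> sets (lborel :: (real^3) measure)" using A by simp
  have J': "J \<subseteq> {1..2^2}" using J by simp
  show ?thesis using d A' J' J(2) bc pos by blast
qed

lemma ev_sets: "f \<in> borel_measurable M \<Longrightarrow> B \<in> sets borel \<Longrightarrow> {\<omega>\<in>space M. f \<omega> \<in> B} \<in> sets M"
  using measurable_sets[of f M borel B] by (simp add: vimage_def Int_def conj_commute)

lemma unit_cube_sets: "unit_cube \<in> sets borel"
  using hbox_sets[of "\<lambda>_. 0" "\<lambda>_. 1"] by (simp add: unit_cube_def)

lemma qcube_disj_fam: "disjoint_family_on (\<lambda>g. {\<omega>\<in>space M. f \<omega> \<in> B \<inter> qcube g}) G"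
  unfolding disjoint_family_on_def using qcube_disj by fastforce

lemma asn_uniform:
  assumes asn: "abstract_scrambled_net M 2 0 2 (Y :: nat \<Rightarrow> 'a \<Rightarrow> real^3)"
    and i: "i \<in> {1..4}" and B: "B \<in> sets borel"
  shows "measure M {\<omega>\<in>space M. Y i \<omega> \<in> B} = measure lborel (B \<inter> unit_cube)"
proof -
  interpret prob_space M by (rule asn_ps[OF asn])
  have mi: "Y i \<in> borel_measurable M" by (rule asn_meas[OF asn i])
  have AEu: "AE \<omega> in M. Y i \<omega> \<in> unit_cube"
    using asn_ae[OF asn] by eventually_elim (use i in \<open>auto simp: is_tmd_net_def\<close>)
  have "measure M {\<omega>\<in>space M. Y i \<omega> \<in> B} = measure M {\<omega>\<in>space M. Y i \<omega> \<in> B \<inter> unit_cube}"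
    apply (rule measure_eq_AE)
    using AEu apply eventually_elim apply auto[1]
    using ev_sets[OF mi B] ev_sets[OF mi sets.Int[OF B unit_cube_sets]] by auto
  also have "{\<omega>\<in>space M. Y i \<omega> \<in> B \<inter> unit_cube} = (\<Union>g\<in>G4. {\<omega>\<in>space M. Y i \<omega> \<in> B \<inter> qcube g})"
    using unit_cube_cover by auto
  also have "measure M \<dots> = (\<Sum>g\<in>G4. measure M {\<omega>\<in>space M. Y i \<omega> \<in> B \<inter> qcube g})"
    by (rule measure_finite_Union)
      (use finite_G4 qcube_disj_fam ev_sets[OF mi] B qcube_sets emeasure_finite in auto)
  also have "\<dots> = (\<Sum>g\<in>G4. measure lborel (B \<inter> qcube g))"
  proof (rule sum.cong[OF refl])
    fix g assume g: "g \<in> G4"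
    have p: "measure M {\<omega>\<in>space M. \<forall>j\<in>{i}. Y j \<omega> \<in> qcube g} = 1/64" using asn_marg[OF asn i g] by simp
    have "measure M {\<omega>\<in>space M. (\<forall>j\<in>{i}. Y j \<omega> \<in> B) \<and> (\<forall>j\<in>{i}. Y j \<omega> \<in> (\<lambda>_. qcube g) j)}
          / measure M {\<omega>\<in>space M. \<forall>j\<in>{i}. Y j \<omega> \<in> (\<lambda>_. qcube g) j}
        = (\<Prod>j\<in>{i}. measure lborel (B \<inter> (\<lambda>_. qcube g) j) / measure lborel ((\<lambda>_. qcube g) j))"
      by (rule asn_cond[OF asn B]) (use i g p in auto)
    then show "measure M {\<omega>\<in>space M. Y i \<omega> \<in> B \<inter> qcube g} = measure lborel (B \<inter> qcube g)"
      using asn_marg[OF asn i g] by (simp add: qcube_measure)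
  qed
  also have "\<dots> = measure lborel (\<Union>g\<in>G4. B \<inter> qcube g)"
    by (rule measure_finite_Union[symmetric])
      (use finite_G4 qcube_fin B qcube_sets in \<open>auto simp: disjoint_family_on_def dest: qcube_disj\<close>)
  also have "(\<Union>g\<in>G4. B \<inter> qcube g) = B \<inter> unit_cube" using unit_cube_cover by auto
  finally show ?thesis .
qed

definition Dd :: "real \<Rightarrow> (real^3) set" where
  "Dd \<delta> = anchored_box (\<chi> _. 1/2 + \<delta>) - anchored_box (\<chi> _. 1/2)"

lemma anchored_box_sets: "anchored_box (a::real^'n::finite) \<in> sets borel"
  using hbox_sets[of "\<lambda>_. 0" "\<lambda>i. a$i"] by (simp add: anchored_box_def)

lemma Dd_sets: "Dd \<delta> \<in> sets borel"
  unfolding Dd_def using anchored_box_sets by (rule sets.Diff) (rule anchored_box_sets)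

lemma Dd_D0: assumes "0 \<le> \<delta>" "\<delta> \<le> 1/2" shows "Dd \<delta> \<in> D0"
proof -
  have A: "anchored_box ((\<chi> _. 1/2)::real^3) \<in> C0"
    unfolding C0_def by (rule CollectI, rule exI[of _ "\<chi> _. 1/2"]) simp
  have B: "anchored_box ((\<chi> _. 1/2 + \<delta>)::real^3) \<in> C0"
    unfolding C0_def by (rule CollectI, rule exI[of _ "\<chi> _. 1/2 + \<delta>"]) (use assms in simp)
  show ?thesis unfolding Dd_def D0_def using A B by blast
qed

lemma anchored_box_const_measure: "0 \<le> c \<Longrightarrow> measure lborel (anchored_box ((\<chi> _. c) :: real^3)) = c^3"
proof -
  assume c: "0 \<le> c"
  have "measure lborel (anchored_box ((\<chi> _. c) :: real^3)) = (\<Prod>j\<in>(UNIV::3 set). c - 0)"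
    unfolding anchored_box_def using hbox_measure[of "\<lambda>_::3. 0" "\<lambda>_. c"] c by simp
  then show ?thesis by (simp add: prod_constant)
qed

lemma Dd_measure:
  assumes "0 \<le> \<delta>" shows "measure lborel (Dd \<delta>) = (1/2 + \<delta>)^3 - 1/8"
proof -
  have sub: "anchored_box ((\<chi> _. 1/2) :: real^3) \<subseteq> anchored_box (\<chi> _. 1/2 + \<delta>)"
  proof (rule subsetI)
    fix x :: "real^3" assume "x \<in> anchored_box (\<chi> _. 1/2)"
    then have h: "\<And>i. 0 \<le> x$i \<and> x$i < 1/2" by (simp add: anchored_box_def)
    show "x \<in> anchored_box (\<chi> _. 1/2 + \<delta>)" unfolding anchored_box_def
    proof (intro CollectI allI)
      fix i show "0 \<le> x$i \<and> x$i < (\<chi> _. 1/2 + \<delta>)$i" using h[of i] assms by simp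
    qed
  qed
  have fin: "emeasure lborel (anchored_box ((\<chi> _. 1/2 + \<delta>) :: real^3)) \<noteq> \<infinity>"
  proof -
    have "anchored_box ((\<chi> _. 1/2 + \<delta>) :: real^3) \<subseteq> cbox 0 (\<chi> _. 1/2 + \<delta>)"
      by (auto simp: anchored_box_def mem_box_cart less_imp_le)
    then have "bounded (anchored_box ((\<chi> _. 1/2 + \<delta>) :: real^3))" using bounded_subset bounded_cbox by blast
    then show ?thesis using emeasure_bounded_finite by (simp add: less_top)
  qed
  have "measure lborel (Dd \<delta>) = measure lborel (anchored_box ((\<chi> _. 1/2 + \<delta>) :: real^3)) - measure lborel (anchored_box ((\<chi> _. 1/2) :: real^3))"
    unfolding Dd_def by (rule measure_Diff[OF fin]) (use sub anchored_box_sets in auto)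
  also have "\<dots> = (1/2 + \<delta>)^3 - (1/2)^3" using assms
    by (simp add: anchored_box_const_measure)
  finally show ?thesis by (simp add: power_divide)
qed

lemma Dd_unit: assumes "\<delta> \<le> 1/2" shows "Dd \<delta> \<inter> unit_cube = Dd \<delta>"
proof -
  have "Dd \<delta> \<subseteq> unit_cube"
  proof (rule subsetI)
    fix x :: "real^3" assume "x \<in> Dd \<delta>"
    then have h: "\<And>i. 0 \<le> x$i \<and> x$i < 1/2 + \<delta>" by (simp add: Dd_def anchored_box_def)
    show "x \<in> unit_cube" unfolding unit_cube_def
    proof (intro CollectI allI)
      fix i show "0 \<le> x$i \<and> x$i < 1" using h[of i] assms by simp
    qed
  qed
  then show ?thesis by blast
qed

lemma Dd_Ct: "\<delta> \<le> 1/4 \<Longrightarrow> Dd \<delta> \<inter> qcube (\<lambda>_. 3) = {}"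
proof -
  assume d: "\<delta> \<le> 1/4"
  { fix x assume "x \<in> Dd \<delta>" "x \<in> qcube (\<lambda>_. 3)"
    then have "x$1 < 1/2 + \<delta>" "3/4 \<le> x$1" by (auto simp: Dd_def anchored_box_def qcube_def)
    then have False using d by simp }
  then show ?thesis by blast
qed

lemma S_Ct: "g \<in> Sset \<Longrightarrow> qcube g \<inter> qcube (\<lambda>_. 3) = {}"
  by (rule qcube_disj) (auto simp: Sset_def)

lemma Dd_qcube:
  assumes g: "g \<in> Sset" and d: "0 < \<delta>" "\<delta> \<le> 1/4"
  shows "measure lborel (Dd \<delta> \<inter> qcube g) = \<delta> / 16"
proof -
  obtain j where j: "g j = 2" "\<And>i. i \<noteq> j \<Longrightarrow> g i \<le> 1" using g unfolding Sset_def by blast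
  define u where "u = (\<lambda>i. if i = j then 1/2 + \<delta> else real (g i + 1) / 4)"
  have eq: "Dd \<delta> \<inter> qcube g = {x. \<forall>i. real (g i) / 4 \<le> x$i \<and> x$i < u i}"
  proof (intro set_eqI iffI)
    fix x assume x: "x \<in> Dd \<delta> \<inter> qcube g"
    show "x \<in> {x. \<forall>i. real (g i) / 4 \<le> x$i \<and> x$i < u i}"
    proof (intro CollectI allI)
      fix i
      show "real (g i) / 4 \<le> x$i \<and> x$i < u i"
        using x by (cases "i = j") (auto simp: Dd_def anchored_box_def qcube_def u_def)
    qed
  next
    fix x assume x: "x \<in> {x. \<forall>i. real (g i) / 4 \<le> x$i \<and> x$i < u i}"
    have xi: "real (g i) / 4 \<le> x$i \<and> x$i < u i" for i using x by blast
    have a: "0 \<le> x$i \<and> x$i < 1/2 + \<delta> \<and> x$i < real (g i + 1) / 4" for i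
    proof (cases "i = j")
      case True then show ?thesis using xi[of i] j d by (simp add: u_def)
    next
      case False
      then have "g i \<le> 1" using j by blast
      then have "real (g i + 1) / 4 \<le> 1/2" by simp
      moreover have "0 \<le> real (g i) / 4" by simp
      ultimately show ?thesis using xi[of i] False d by (simp add: u_def)
    qed
    have b: "1/2 \<le> x$j" using xi[of j] j by simp
    show "x \<in> Dd \<delta> \<inter> qcube g"
      using a b xi unfolding Dd_def anchored_box_def qcube_def by (auto simp: not_less)
  qed
  have "measure lborel (Dd \<delta> \<inter> qcube g) = (\<Prod>i\<in>UNIV. u i - real (g i) / 4)"
    unfolding eq
  proof (rule hbox_measure)
    fix i show "real (g i) / 4 \<le> u i" using j d by (cases "i = j") (auto simp: u_def divide_right_mono)
  qed
  also have "\<dots> = (\<Prod>i\<in>UNIV. if i = j then \<delta> else 1/4)"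
    by (rule prod.cong) (auto simp: u_def j diff_divide_distrib[symmetric])
  also have "\<dots> = \<delta> * (\<Prod>i\<in>UNIV - {j}. if i = j then \<delta> else 1/4)"
    by (subst prod.remove[of UNIV j]) auto
  also have "(\<Prod>i\<in>UNIV - {j}. if i = j then \<delta> else 1/4) = (\<Prod>i\<in>UNIV - {j}. (1/4::real))"
    by (rule prod.cong) auto
  also have "\<dots> = (1/4)^2" by (simp add: prod_constant card_Diff_singleton)
  finally show ?thesis by (simp add: power2_eq_square)
qed

lemma finite_Sset: "finite Sset"
  using finite_subset[OF Sset_G4 finite_G4] .

lemma main_bound:
  assumes asn: "abstract_scrambled_net M 2 0 2 (Y :: nat \<Rightarrow> 'a \<Rightarrow> real^3)"
    and d: "0 < \<delta>" "\<delta> \<le> 1/4"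
  shows "\<delta>^3 \<le> measure M {\<omega>\<in>space M. Y 1 \<omega> \<in> Dd \<delta> \<and> Y 2 \<omega> \<in> Dd \<delta> \<and> Y 3 \<omega> \<in> Dd \<delta>}"
proof -
  interpret prob_space M by (rule asn_ps[OF asn])
  define D where "D = Dd \<delta>"
  define Ct where "Ct = qcube (\<lambda>_. 3)"
  define I where "I = Sset \<times> Sset \<times> Sset"
  define F where "F = (\<lambda>t::(3\<Rightarrow>nat)\<times>(3\<Rightarrow>nat)\<times>(3\<Rightarrow>nat). {\<omega>\<in>space M. Y 4 \<omega> \<in> Ct \<and>
      Y 1 \<omega> \<in> qcube (fst t) \<and> Y 2 \<omega> \<in> qcube (fst (snd t)) \<and> Y 3 \<omega> \<in> qcube (snd (snd t))})"
  define E where "E = (\<lambda>t::(3\<Rightarrow>nat)\<times>(3\<Rightarrow>nat)\<times>(3\<Rightarrow>nat). {\<omega>\<in>space M. Y 4 \<omega> \<in> Ct \<and>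
      Y 1 \<omega> \<in> qcube (fst t) \<and> Y 2 \<omega> \<in> qcube (fst (snd t)) \<and> Y 3 \<omega> \<in> qcube (snd (snd t)) \<and>
      Y 1 \<omega> \<in> D \<and> Y 2 \<omega> \<in> D \<and> Y 3 \<omega> \<in> D})"
  define T where "T = {\<omega>\<in>space M. Y 4 \<omega> \<in> Ct}"
  have m1: "Y 1 \<in> borel_measurable M" and m2: "Y 2 \<in> borel_measurable M"
    and m3: "Y 3 \<in> borel_measurable M" and m4: "Y 4 \<in> borel_measurable M"
    using asn_meas[OF asn] by auto
  have Ds: "D \<in> sets borel" unfolding D_def by (rule Dd_sets)
  have Cts: "Ct \<in> sets borel" unfolding Ct_def by (rule qcube_sets)
  have finI: "finite I" unfolding I_def using finite_Sset by simp
  have Fs: "F t \<in> events" for t unfolding F_def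
    by (intro sets.sets_Collect_conj ev_sets m1 m2 m3 m4 Cts qcube_sets)
  have Es: "E t \<in> events" for t unfolding E_def
    by (intro sets.sets_Collect_conj ev_sets m1 m2 m3 m4 Cts qcube_sets Ds)
  have Ts: "T \<in> events" unfolding T_def by (intro ev_sets m4 Cts)
  have EF: "E t \<subseteq> F t" for t unfolding E_def F_def by auto
  have Fdisj: "disjoint_family_on F I"
  proof (unfold disjoint_family_on_def, intro ballI impI)
    fix t t' assume "t \<in> I" "t' \<in> I" "t \<noteq> t'"
    show "F t \<inter> F t' = {}"
    proof (rule ccontr)
      assume "F t \<inter> F t' \<noteq> {}"
      then obtain \<omega> where w: "\<omega> \<in> F t" "\<omega> \<in> F t'" by blast
      have "fst t = fst t'" using w qcube_disj unfolding F_def by blast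
      moreover have "fst (snd t) = fst (snd t')" using w qcube_disj unfolding F_def by blast
      moreover have "snd (snd t) = snd (snd t')" using w qcube_disj unfolding F_def by blast
      ultimately have "t = t'" by (simp add: prod_eq_iff)
      then show False using \<open>t \<noteq> t'\<close> by simp
    qed
  qed
  have Edisj: "disjoint_family_on E I"
    using Fdisj EF unfolding disjoint_family_on_def by blast
  have mT: "measure M T = 1/64"
    unfolding T_def Ct_def by (rule asn_marg[OF asn]) (auto simp: G4_def)
  have TF: "measure M T = measure M (\<Union>t\<in>I. F t)"
  proof (rule measure_eq_AE)
    show "AE \<omega> in M. (\<omega> \<in> T) = (\<omega> \<in> (\<Union>t\<in>I. F t))"
      using asn_ae[OF asn]
    proof eventually_elim
      case (elim \<omega>)
      show ?case
      proof
        assume "\<omega> \<in> T"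
        then have w: "\<omega> \<in> space M" "Y 4 \<omega> \<in> Ct" unfolding T_def by auto
        define P where "P = (\<lambda>i. Y i \<omega>)"
        have net: "is_tmd_net 2 0 2 P" using elim unfolding P_def .
        have top: "P 4 \<in> qcube (\<lambda>_. 3)" using w unfolding P_def Ct_def by simp
        define g where "g = (\<lambda>i j. nat \<lfloor>4 * P i $ j\<rfloor>)"
        have ns: "P i \<in> qcube (g i) \<and> g i \<in> Sset" if "i \<in> {1,2,3}" for i
          unfolding g_def by (rule net_struct[OF net top that])
        have "(g 1, g 2, g 3) \<in> I" using ns by (auto simp: I_def)
        moreover have "\<omega> \<in> F (g 1, g 2, g 3)" using ns w unfolding F_def P_def by auto
        ultimately show "\<omega> \<in> (\<Union>t\<in>I. F t)" by blast
      next
        assume "\<omega> \<in> (\<Union>t\<in>I. F t)"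
        then show "\<omega> \<in> T" unfolding F_def T_def by auto
      qed
    qed
    show "T \<in> events" by (rule Ts)
    show "(\<Union>t\<in>I. F t) \<in> events" using finI Fs by auto
  qed
  also have "\<dots> = (\<Sum>t\<in>I. measure M (F t))"
    by (rule measure_finite_Union[OF finI]) (use Fs Fdisj emeasure_finite in auto)
  finally have sumF: "(\<Sum>t\<in>I. measure M (F t)) = 1/64" using mT by simp
  have EFm: "measure M (E t) = 64 * \<delta>^3 * measure M (F t)" if t: "t \<in> I" for t
  proof (cases "measure M (F t) = 0")
    case True
    then have "measure M (E t) = 0"
      using finite_measure_mono[OF EF Fs, of t] measure_nonneg[of M "E t"] by linarith
    then show ?thesis using True by simp
  next
    case False
    obtain g1 g2 g3 where tt: "t = (g1, g2, g3)" by (cases t) auto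
    have gS: "g1 \<in> Sset" "g2 \<in> Sset" "g3 \<in> Sset" using t tt by (auto simp: I_def)
    define Cs where "Cs = (\<lambda>j::nat. if j = 4 then Ct else if j = 1 then qcube g1 else if j = 2 then qcube g2 else qcube g3)"
    define J where "J = {1,2,3,4::nat}"
    define A where "A = D \<union> Ct"
    have As: "A \<in> sets borel" unfolding A_def using Ds Cts by auto
    have CsG: "\<forall>j\<in>J. Cs j \<in> qcube ` G4"
      using gS Sset_G4 unfolding Cs_def J_def Ct_def by (auto simp: G4_def)
    have FJ: "{\<omega>\<in>space M. \<forall>j\<in>J. Y j \<omega> \<in> Cs j} = F t"
      unfolding F_def J_def Cs_def tt by auto
    have DC: "D \<inter> Ct = {}" unfolding D_def Ct_def using Dd_Ct d by simp
    have SC: "qcube g \<inter> Ct = {}" if "g \<in> Sset" for g unfolding Ct_def using S_Ct that by simp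
    have EJ: "{\<omega>\<in>space M. (\<forall>j\<in>J. Y j \<omega> \<in> A) \<and> (\<forall>j\<in>J. Y j \<omega> \<in> Cs j)} = E t"
      unfolding E_def J_def Cs_def tt A_def using DC SC[OF gS(1)] SC[OF gS(2)] SC[OF gS(3)] by auto
    have pos: "measure M {\<omega>\<in>space M. \<forall>j\<in>J. Y j \<omega> \<in> Cs j} > 0"
      unfolding FJ using False measure_nonneg[of M "F t"] by linarith
    have "measure M {\<omega>\<in>space M. (\<forall>j\<in>J. Y j \<omega> \<in> A) \<and> (\<forall>j\<in>J. Y j \<omega> \<in> Cs j)}
          / measure M {\<omega>\<in>space M. \<forall>j\<in>J. Y j \<omega> \<in> Cs j}
        = (\<Prod>j\<in>J. measure lborel (A \<inter> Cs j) / measure lborel (Cs j))"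
      by (rule asn_cond[OF asn As _ _ CsG pos]) (auto simp: J_def)
    also have "\<dots> = 64 * \<delta>^3"
    proof -
      have AC: "A \<inter> qcube g = D \<inter> qcube g" if "g \<in> Sset" for g
        unfolding A_def using SC[OF that] by blast
      have ACt: "A \<inter> Ct = Ct" unfolding A_def by blast
      have r: "measure lborel (A \<inter> qcube g) / measure lborel (qcube g) = 4 * \<delta>" if "g \<in> Sset" for g
        unfolding AC[OF that] D_def by (simp only: Dd_qcube[OF that d] qcube_measure) simp
      have rt: "measure lborel (A \<inter> Ct) / measure lborel Ct = 1"
        by (simp only: ACt) (simp add: Ct_def qcube_measure)
      show ?thesis unfolding J_def Cs_def using r[OF gS(1)] r[OF gS(2)] r[OF gS(3)] rt
        by (simp add: power3_eq_cube)
    qed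
    finally show ?thesis unfolding FJ EJ using False by (simp add: field_simps)
  qed
  have "measure M (\<Union>t\<in>I. E t) = (\<Sum>t\<in>I. measure M (E t))"
    by (rule measure_finite_Union[OF finI]) (use Es Edisj emeasure_finite in auto)
  also have "\<dots> = (\<Sum>t\<in>I. 64 * \<delta>^3 * measure M (F t))" using EFm by (rule sum.cong[OF refl])
  also have "\<dots> = 64 * \<delta>^3 * (\<Sum>t\<in>I. measure M (F t))" by (simp add: sum_distrib_left)
  also have "\<dots> = \<delta>^3" using sumF by simp
  finally have U: "measure M (\<Union>t\<in>I. E t) = \<delta>^3" .
  have sub: "(\<Union>t\<in>I. E t) \<subseteq> {\<omega>\<in>space M. Y 1 \<omega> \<in> Dd \<delta> \<and> Y 2 \<omega> \<in> Dd \<delta> \<and> Y 3 \<omega> \<in> Dd \<delta>}"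
    unfolding E_def D_def by auto
  have "{\<omega>\<in>space M. Y 1 \<omega> \<in> Dd \<delta> \<and> Y 2 \<omega> \<in> Dd \<delta> \<and> Y 3 \<omega> \<in> Dd \<delta>} \<in> events"
    by (intro sets.sets_Collect_conj ev_sets m1 m2 m3 Dd_sets)
  from finite_measure_mono[OF sub this] U show ?thesis by simp
qed

lemma ratio_bound:
  assumes asn: "abstract_scrambled_net M 2 0 2 (Y :: nat \<Rightarrow> 'a \<Rightarrow> real^3)"
    and d: "0 < \<delta>" "\<delta> \<le> 1/4"
  shows "1 / (3/4 + 3*\<delta>/2 + \<delta>^2)^3 \<le>
     measure M {\<omega>\<in>space M. Y 1 \<omega> \<in> Dd \<delta> \<and> Y 2 \<omega> \<in> Dd \<delta> \<and> Y 3 \<omega> \<in> Dd \<delta>}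
       / (\<Prod>i\<in>{1..3::nat}. measure M {\<omega>\<in>space M. Y i \<omega> \<in> Dd \<delta>})"
proof -
  define q where "q = 3/4 + 3*\<delta>/2 + \<delta>^2"
  define L where "L = (1/2 + \<delta>)^3 - 1/8"
  have Lq: "L = \<delta> * q" unfolding L_def q_def by (simp add: power3_eq_cube power2_eq_square field_simps)
  have qpos: "0 < q" unfolding q_def using d by (simp add: add_pos_nonneg)
  have Lpos: "0 < L" using Lq d qpos by simp
  have mi: "measure M {\<omega>\<in>space M. Y i \<omega> \<in> Dd \<delta>} = L" if "i \<in> {1..3}" for i
  proof -
    have "measure M {\<omega>\<in>space M. Y i \<omega> \<in> Dd \<delta>} = measure lborel (Dd \<delta> \<inter> unit_cube)"
      by (rule asn_uniform[OF asn _ Dd_sets]) (use that in auto)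
    also have "\<dots> = L" using Dd_unit[of \<delta>] Dd_measure[of \<delta>] d by (simp add: L_def)
    finally show ?thesis .
  qed
  have pr: "(\<Prod>i\<in>{1..3::nat}. measure M {\<omega>\<in>space M. Y i \<omega> \<in> Dd \<delta>}) = L^3"
  proof -
    have "(\<Prod>i\<in>{1..3::nat}. measure M {\<omega>\<in>space M. Y i \<omega> \<in> Dd \<delta>}) = (\<Prod>i\<in>{1..3::nat}. L)"
      by (rule prod.cong[OF refl]) (rule mi)
    then show ?thesis by simp
  qed
  have "1 / q^3 = \<delta>^3 / L^3" using d qpos by (simp add: Lq power_mult_distrib)
  also have "\<dots> \<le> measure M {\<omega>\<in>space M. Y 1 \<omega> \<in> Dd \<delta> \<and> Y 2 \<omega> \<in> Dd \<delta> \<and> Y 3 \<omega> \<in> Dd \<delta>} / L^3"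
    using main_bound[OF asn d] Lpos by (simp add: divide_right_mono)
  finally show ?thesis unfolding pr q_def .
qed

lemma ereal_ge_eps:
  assumes "\<And>\<epsilon>. \<epsilon> > 0 \<Longrightarrow> ereal (c - \<epsilon>) \<le> x"
  shows "ereal c \<le> x"
proof (cases x)
  case (real r)
  have "c \<le> r"
  proof (rule field_le_epsilon)
    fix e :: real assume "0 < e"
    then show "c \<le> r + e" using assms[of e] real by simp
  qed
  then show ?thesis using real by simp
next
  case PInf then show ?thesis by simp
next
  case MInf then show ?thesis using assms[of 1] by simp
qed

theorem proposition3p9:
  fixes M :: "'a measure" and Y :: "nat \<Rightarrow> 'a \<Rightarrow> real^3"
  assumes "abstract_scrambled_net M 2 0 2 Y"
  shows "(\<forall>\<epsilon>>0. \<exists>D\<in>(D0 :: (real^3) set set).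
            measure M {\<omega>\<in>space M. Y 1 \<omega> \<in> D \<and> Y 2 \<omega> \<in> D \<and> Y 3 \<omega> \<in> D}
              / (\<Prod>i\<in>{1..3::nat}. measure M {\<omega>\<in>space M. Y i \<omega> \<in> D})
            \<ge> (4/3)^3 - \<epsilon>)
         \<and> gamma_D0 M 4 Y \<ge> ereal ((4/3)^3)"
proof -
  note asn = assms
  have part1: "\<forall>\<epsilon>>0. \<exists>D\<in>(D0 :: (real^3) set set).
            measure M {\<omega>\<in>space M. Y 1 \<omega> \<in> D \<and> Y 2 \<omega> \<in> D \<and> Y 3 \<omega> \<in> D}
              / (\<Prod>i\<in>{1..3::nat}. measure M {\<omega>\<in>space M. Y i \<omega> \<in> D})
            \<ge> (4/3)^3 - \<epsilon>"
  proof (intro allI impI)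
    fix \<epsilon> :: real assume e: "\<epsilon> > 0"
    have lim: "((\<lambda>\<delta>::real. 1/(3/4 + 3*\<delta>/2 + \<delta>^2)^3) \<longlongrightarrow> (4/3)^3) (at_right 0)"
    proof -
      have "((\<lambda>\<delta>::real. 1/(3/4 + 3*\<delta>/2 + \<delta>^2)^3) \<longlongrightarrow> 1/(3/4 + 3*0/2 + 0^2)^3) (at_right 0)"
        by (intro tendsto_intros) auto
      then show ?thesis by (simp add: power_divide)
    qed
    have ev1: "eventually (\<lambda>\<delta>. (4/3)^3 - \<epsilon> < 1/(3/4 + 3*\<delta>/2 + \<delta>^2)^3) (at_right 0)"
      using order_tendstoD(1)[OF lim] e by simp
    have ev2: "eventually (\<lambda>\<delta>::real. \<delta> \<in> {0<..<1/4}) (at_right 0)"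
      by (rule eventually_at_right_real) simp
    have "eventually (\<lambda>\<delta>. (4/3)^3 - \<epsilon> < 1/(3/4 + 3*\<delta>/2 + \<delta>^2)^3 \<and> \<delta> \<in> {0<..<1/4}) (at_right 0)"
      using eventually_conj[OF ev1 ev2] .
    then obtain \<delta> :: real where dd: "(4/3)^3 - \<epsilon> < 1/(3/4 + 3*\<delta>/2 + \<delta>^2)^3" "0 < \<delta>" "\<delta> < 1/4"
      using eventually_happens[of _ "at_right (0::real)"] by auto
    have "Dd \<delta> \<in> D0" using dd by (intro Dd_D0) auto
    moreover have "(4/3)^3 - \<epsilon> \<le> measure M {\<omega>\<in>space M. Y 1 \<omega> \<in> Dd \<delta> \<and> Y 2 \<omega> \<in> Dd \<delta> \<and> Y 3 \<omega> \<in> Dd \<delta>}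
       / (\<Prod>i\<in>{1..3::nat}. measure M {\<omega>\<in>space M. Y i \<omega> \<in> Dd \<delta>})"
      using dd(1) ratio_bound[OF asn dd(2)] dd(3) by fastforce
    ultimately show "\<exists>D\<in>(D0 :: (real^3) set set).
            measure M {\<omega>\<in>space M. Y 1 \<omega> \<in> D \<and> Y 2 \<omega> \<in> D \<and> Y 3 \<omega> \<in> D}
              / (\<Prod>i\<in>{1..3::nat}. measure M {\<omega>\<in>space M. Y i \<omega> \<in> D})
            \<ge> (4/3)^3 - \<epsilon>" by blast
  qed
  have part2: "gamma_D0 M 4 Y \<ge> ereal ((4/3)^3)"
  proof (rule ereal_ge_eps)
    fix \<epsilon> :: real assume e: "\<epsilon> > 0"
    obtain D where D: "D \<in> (D0 :: (real^3) set set)"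
      and r: "(4/3)^3 - \<epsilon> \<le> measure M {\<omega>\<in>space M. Y 1 \<omega> \<in> D \<and> Y 2 \<omega> \<in> D \<and> Y 3 \<omega> \<in> D}
              / (\<Prod>i\<in>{1..3::nat}. measure M {\<omega>\<in>space M. Y i \<omega> \<in> D})"
      using part1 e by blast
    have e3: "{1..3::nat} = {1,2,3}" by auto
    have ev: "{\<omega>\<in>space M. \<forall>j\<in>{1,2,3::nat}. Y j \<omega> \<in> D} = {\<omega>\<in>space M. Y 1 \<omega> \<in> D \<and> Y 2 \<omega> \<in> D \<and> Y 3 \<omega> \<in> D}"
      by auto
    define f where "f = (\<lambda>SJ::(real^3) set \<times> nat set.
        max (ereal (measure M {\<omega>\<in>space M. \<forall>j\<in>snd SJ. Y j \<omega> \<in> fst SJ}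
                    / (\<Prod>j\<in>snd SJ. measure M {\<omega>\<in>space M. Y j \<omega> \<in> fst SJ})))
            (ereal (measure M {\<omega>\<in>space M. \<forall>j\<in>snd SJ. Y j \<omega> \<notin> fst SJ}
                    / (\<Prod>j\<in>snd SJ. measure M {\<omega>\<in>space M. Y j \<omega> \<notin> fst SJ}))))"
    have mem: "(D, {1,2,3::nat}) \<in> {(S, J). S \<in> D0 \<and> J \<subseteq> {1..4::nat} \<and> J \<noteq> {}}" using D by auto
    have "ereal ((4/3)^3 - \<epsilon>) \<le> ereal (measure M {\<omega>\<in>space M. Y 1 \<omega> \<in> D \<and> Y 2 \<omega> \<in> D \<and> Y 3 \<omega> \<in> D}
              / (\<Prod>i\<in>{1..3::nat}. measure M {\<omega>\<in>space M. Y i \<omega> \<in> D}))"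
      using r by simp
    also have "\<dots> = ereal (measure M {\<omega>\<in>space M. \<forall>j\<in>{1,2,3::nat}. Y j \<omega> \<in> D}
                    / (\<Prod>j\<in>{1,2,3::nat}. measure M {\<omega>\<in>space M. Y j \<omega> \<in> D}))"
      by (simp only: ev e3)
    also have "\<dots> \<le> f (D, {1,2,3})" unfolding f_def by simp
    also have "\<dots> \<le> (SUP SJ \<in> {(S, J). S \<in> D0 \<and> J \<subseteq> {1..4} \<and> J \<noteq> {}}. f SJ)"
      by (rule SUP_upper[OF mem])
    also have "\<dots> = gamma_D0 M 4 Y" unfolding gamma_D0_def f_def by simp
    finally show "ereal ((4/3)^3 - \<epsilon>) \<le> gamma_D0 M 4 Y" .
  qed
  show ?thesis using part1 part2 by blast
qed

end
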